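(* Let $n\ge 2$ and let $\mathrm{Rect}^\ast(n)=\{(a^b):ab=n,\ a,b\ge 2\}$. Then: (1) $\mathrm{Rect}^\ast(n)\cap \mathcal M_n=\varnothing$; (2) if $n$ is even and $n\ge 4$, then $\mathrm{Rect}^\ast(n)\cap \mathcal L_n=\{(n/2,n/2)\}$ and $\mathrm{Rect}^\ast(n)\cap \mathcal R_n=\{(2^{n/2})\}$; if $n=2$ or $n$ is odd, both intersections are empty; (3) $\mathrm{Rect}^\ast(n)\cap Ax_n=\{(a^a)\}$ if $n=a^2$ is a square, and $\mathrm{Rect}^\ast(n)\cap Ax_n=\varnothing$ otherwise; (4) $\mathrm{Rect}^\ast(n)\subset D_2(n)\cap L_2(n)$.
   Context: The partition graph $G_n$ has as vertices the integer partitions of $n$; two partitions are adjacent if one is obtained from the other by a single elementary unit transfer followed by reordering: decrease one part by $1$ and either increase a different part by $1$ or create a new part equal to $1$, then delete a part that became $0$ and sort in nonincreasing order (the result being different from the original). $(a^b)$ denotes $b$ parts equal to $a$. The main chain is $\mathcal M_n=\{(n-k,1^k):0\le k\le n-1\}$; the left edge is $\mathcal L_n=\{(n-k,k):1\le k\le\lfloor n/2\rfloor\}$; the right edge $\mathcal R_n$ is the set of conjugates of the partitions in $\mathcal L_n$ (conjugation = transposing the Ferrers diagram). $Ax_n$ is the set of self-conjugate partitions of $n$. $D_d(n)$ is the set of vertices of $G_n$ of degree $d$. The local simplex dimension of a vertex $v$ is $m-1$ where $m$ is the largest size of a clique of $G_n$ containing $v$; $L_r(n)$ is the set of vertices of local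 simplex dimension $r$. *)

theory Defs
  imports Main
begin

definition is_partition :: "nat \<Rightarrow> nat list \<Rightarrow> bool" where
  "is_partition n p \<longleftrightarrow> sorted_wrt (\<ge>) p \<and> 0 \<notin> set p \<and> sum_list p = n"

definition partitions :: "nat \<Rightarrow> nat list set" where
  "partitions n = {p. is_partition n p}"

definition rect_part :: "nat \<Rightarrow> nat \<Rightarrow> nat list" where
  "rect_part a b = replicate b a"

text \<open>Elementary unit transfer: decrease part i by 1; increase part j (if j < length p)
  or create a new part 1 (if j = length p); delete zero parts; sort nonincreasingly.\<close>
definition transfer :: "nat list \<Rightarrow> nat \<Rightarrow> nat \<Rightarrow> nat list" where
  "transfer p i j =
     rev (sort (filter (\<lambda>x. x \<noteq> 0)
       (if j < length p then (p[i := p ! i - 1])[j := p ! j + 1]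
        else p[i := p ! i - 1] @ [1])))"

definition one_move :: "nat list \<Rightarrow> nat list \<Rightarrow> bool" where
  "one_move p q \<longleftrightarrow>
     (\<exists>i j. i < length p \<and> j \<le> length p \<and> i \<noteq> j \<and> q = transfer p i j \<and> q \<noteq> p)"

definition adj :: "nat \<Rightarrow> nat list \<Rightarrow> nat list \<Rightarrow> bool" where
  "adj n p q \<longleftrightarrow> p \<in> partitions n \<and> q \<in> partitions n \<and> (one_move p q \<or> one_move q p)"

definition main_chain :: "nat \<Rightarrow> nat list set" where
  "main_chain n = {(n - k) # replicate k 1 | k. k \<le> n - 1}"

definition left_edge :: "nat \<Rightarrow> nat list set" where
  "left_edge n = {[n - k, k] | k. 1 \<le> k \<and> k \<le> n div 2}"

definition conj_part :: "nat list \<Rightarrow> nat list" where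
  "conj_part p = map (\<lambda>i. length (filter (\<lambda>x. i < x) p)) [0..<(if p = [] then 0 else hd p)]"

definition right_edge :: "nat \<Rightarrow> nat list set" where
  "right_edge n = conj_part ` left_edge n"

definition self_conj :: "nat \<Rightarrow> nat list set" where
  "self_conj n = {p \<in> partitions n. conj_part p = p}"

definition degree :: "nat \<Rightarrow> nat list \<Rightarrow> nat" where
  "degree n p = card {q. adj n p q}"

definition deg_set :: "nat \<Rightarrow> nat \<Rightarrow> nat list set" where
  "deg_set d n = {p \<in> partitions n. degree n p = d}"

definition is_clique :: "nat \<Rightarrow> nat list set \<Rightarrow> bool" where
  "is_clique n C \<longleftrightarrow> C \<subseteq> partitions n \<and> (\<forall>p\<in>C. \<forall>q\<in>C. p \<noteq> q \<longrightarrow> adj n p q)"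

definition max_clique_at :: "nat \<Rightarrow> nat list \<Rightarrow> nat" where
  "max_clique_at n v = Max {card C | C. is_clique n C \<and> v \<in> C}"

definition local_dim_set :: "nat \<Rightarrow> nat \<Rightarrow> nat list set" where
  "local_dim_set r n = {v \<in> partitions n. max_clique_at n v - 1 = r}"

definition rect_star :: "nat \<Rightarrow> nat list set" where
  "rect_star n = {rect_part a b | a b. a * b = n \<and> 2 \<le> a \<and> 2 \<le> b}"

end

theory Submission
  imports Defs "HOL-Library.Multiset"
begin

lemma desc_unique:
  fixes p q :: "nat list"
  assumes "sorted_wrt (\<ge>) p" "sorted_wrt (\<ge>) q" "mset p = mset q"
  shows "p = q"
proof -
  have "sorted (rev p)" "sorted (rev q)" using assms(1,2) by (simp_all add: sorted_wrt_rev)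
  have "sort (rev p) = rev q" by (rule properties_for_sort) (use assms \<open>sorted (rev q)\<close> in auto)
  moreover have "sort (rev p) = rev p" using \<open>sorted (rev p)\<close> by (simp add: sorted_sort_id)
  ultimately show ?thesis by simp
qed

lemma transfer_sorted: "sorted_wrt (\<ge>) (transfer p i j)"
  unfolding transfer_def by (simp add: sorted_wrt_rev)

lemma mset_transfer:
  assumes "i < length p" "j < length p" "i \<noteq> j"
  shows "mset (transfer p i j) = filter_mset (\<lambda>x. x \<noteq> 0)
     (add_mset (p!j+1) (add_mset (p!i-1) (mset p - {#p!i#}) - {#p!j#}))"
  using assms unfolding transfer_def by (simp add: mset_update mset_filter)

lemma mset_transfer_new:
  assumes "i < length p"
  shows "mset (transfer p i (length p)) = filter_mset (\<lambda>x. x \<noteq> 0)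
     (add_mset 1 (add_mset (p!i-1) (mset p - {#p!i#})))"
  using assms unfolding transfer_def by (simp add: mset_update mset_filter)

lemma split2:
  fixes p :: "nat list"
  assumes "i < length p" "j < length p" "i \<noteq> j"
  obtains R where "mset p = add_mset (p!i) (add_mset (p!j) R)" "size R = length p - 2"
    "set_mset R \<subseteq> set p"
proof -
  have "p[i:=p!j+1] ! j = p!j" using assms by simp
  hence "p!j \<in> set (p[i:=p!j+1])" using assms by (metis length_list_update nth_mem)
  hence "p!j \<in># mset (p[i:=p!j+1])" by simp
  hence "p!j \<in># mset p - {#p!i#}" using assms by (simp add: mset_update)
  moreover have "p!i \<in># mset p" using assms by simp
  ultimately have e: "mset p = add_mset (p!i) (add_mset (p!j) (mset p - {#p!i#} - {#p!j#}))"
    by (metis insert_DiffM)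
  define R where "R = mset p - {#p!i#} - {#p!j#}"
  have "set_mset R \<subseteq> set p" unfolding R_def by (auto dest!: in_diffD)
  moreover have "size R = length p - 2" using arg_cong[OF e, of size] unfolding R_def[symmetric] by simp
  ultimately show ?thesis using that e R_def by blast
qed


lemma all_eq_replicate: "(\<forall>x\<in>#R. x = a) \<Longrightarrow> R = replicate_mset (size R) a"
  by (induction R) auto

lemma sorted_rep[simp]: "sorted_wrt (\<lambda>x y. y \<le> x) (replicate k (a::nat))"
  by (induction k) auto
lemma filter_rep[simp]: "0 < (a::nat) \<Longrightarrow> filter_mset ((<) 0) (replicate_mset c a) = replicate_mset c a"
  by (induction c) auto

definition qa :: "nat \<Rightarrow> nat \<Rightarrow> nat list" where
  "qa a b = (a+1) # replicate (b-2) a @ [a-1]"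
definition qb :: "nat \<Rightarrow> nat \<Rightarrow> nat list" where
  "qb a b = replicate (b-1) a @ [a-1, 1]"

lemma sorted_qa: "a \<ge> 2 \<Longrightarrow> sorted_wrt (\<ge>) (qa a b)"
  unfolding qa_def by (auto simp: sorted_wrt_append)
lemma sorted_qb: "a \<ge> 2 \<Longrightarrow> sorted_wrt (\<ge>) (qb a b)"
  unfolding qb_def by (auto simp: sorted_wrt_append)
lemma mset_qa: "mset (qa a b) = add_mset (a+1) (add_mset (a-1) (replicate_mset (b-2) a))"
  unfolding qa_def by simp
lemma mset_qb: "mset (qb a b) = add_mset 1 (add_mset (a-1) (replicate_mset (b-1) a))"
  unfolding qb_def by simp

lemma fwd:
  assumes "a \<ge> 2" "b \<ge> 2" "one_move (replicate b a) q"
  shows "q = qa a b \<or> q = qb a b"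
proof -
  obtain i j where ij: "i < b" "j \<le> b" "i \<noteq> j" "q = transfer (replicate b a) i j"
    using assms(3) unfolding one_move_def by auto
  obtain c where c: "b = Suc (Suc c)" using assms(2) by (metis add_2_eq_Suc le_Suc_ex)
  show ?thesis
  proof (cases "j < b")
    case True
    hence "mset q = filter_mset (\<lambda>x. x \<noteq> 0)
       (add_mset (a+1) (add_mset (a-1) (replicate_mset b a - {#a#}) - {#a#}))"
      using ij mset_transfer[of i "replicate b a" j] by simp
    also have "\<dots> = mset (qa a b)" using assms(1) c by (simp add: mset_qa)
    finally have "q = qa a b" using desc_unique transfer_sorted sorted_qa assms(1) ij(4) by metis
    thus ?thesis ..
  next
    case False
    hence "j = b" using ij by simp
    hence "mset q = filter_mset (\<lambda>x. x \<noteq> 0)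
       (add_mset 1 (add_mset (a-1) (replicate_mset b a - {#a#})))"
      using ij mset_transfer_new[of i "replicate b a"] by simp
    also have "\<dots> = mset (qb a b)" using assms(1) c by (simp add: mset_qb)
    finally have "q = qb a b" using desc_unique transfer_sorted sorted_qb assms(1) ij(4) by metis
    thus ?thesis ..
  qed
qed


lemma bwd:
  assumes "a \<ge> 2" "b \<ge> 2" "one_move q (replicate b a)" "sorted_wrt (\<ge>) q" "0 \<notin> set q"
  shows "q = qa a b \<or> q = qb a b"
proof -
  obtain i j where ij: "i < length q" "j \<le> length q" "i \<noteq> j" "replicate b a = transfer q i j"
    using assms(3) unfolding one_move_def by auto
  have allA: "x = a" if "x \<in># mset (replicate b a)" for x using that by (simp split: if_splits)
  show ?thesis
  proof (cases "j < length q")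
    case True
    obtain R where R: "mset q = add_mset (q!i) (add_mset (q!j) R)" "set_mset R \<subseteq> set q"
      using split2[OF ij(1) True ij(3)] by metis
    have Rnz: "\<forall>x\<in>#R. x \<noteq> 0" using R(2) assms(5) by (metis gr0I subsetD)
    have "mset (replicate b a) = filter_mset (\<lambda>x. x \<noteq> 0)
       (add_mset (q!j+1) (add_mset (q!i-1) (mset q - {#q!i#}) - {#q!j#}))"
      using ij True mset_transfer[of i q j] by simp
    also have "\<dots> = filter_mset (\<lambda>x. x \<noteq> 0) (add_mset (q!j+1) (add_mset (q!i-1) R))"
    proof -
      have "add_mset (q!i-1) (mset q - {#q!i#}) - {#q!j#} = add_mset (q!i-1) R"
        using R(1) by (metis add_mset_commute add_mset_remove_trivial)
      thus ?thesis by simp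
    qed
    also have "\<dots> = add_mset (q!j+1) (filter_mset (\<lambda>x. x \<noteq> 0) (add_mset (q!i-1) R))" by simp
    also have "filter_mset (\<lambda>x. x \<noteq> 0) R = R" using Rnz by (simp add: filter_mset_eq_conv)
    hence "filter_mset (\<lambda>x. x \<noteq> 0) (add_mset (q!i-1) R) = (if q!i - 1 = 0 then R else add_mset (q!i-1) R)"
      by simp
    finally have E: "mset (replicate b a) = add_mset (q!j+1) (if q!i - 1 = 0 then R else add_mset (q!i-1) R)" .
    have memb: "x = a" if "x \<in># add_mset (q!j+1) (if q!i - 1 = 0 then R else add_mset (q!i-1) R)" for x
      using that E allA by metis
    have Ra: "\<forall>x\<in>#R. x = a" using memb by (auto split: if_splits)
    hence Rrep: "R = replicate_mset (size R) a" by (rule all_eq_replicate)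
    have qj: "q!j + 1 = a" using memb[of "q!j+1"] by simp
    have sz: "b = Suc (size R) + (if q!i - 1 = 0 then 0 else 1)" using arg_cong[OF E, of size] by auto
    show ?thesis
    proof (cases "q!i - 1 = 0")
      case True
      have "q!i \<noteq> 0" using assms(5) ij(1) by (metis nth_mem)
      hence "q!i = 1" using True by simp
      moreover have "q!j = a-1" using qj by simp
      moreover have "R = replicate_mset (b-1) a" using Rrep sz True by simp
      ultimately have "mset q = mset (qb a b)" using R(1) unfolding mset_qb
        by (simp add: add_mset_commute)
      hence "q = qb a b" using desc_unique assms(4) sorted_qb assms(1) by metis
      thus ?thesis ..
    next
      case False
      have "q!i - 1 = a" using memb[of "q!i - 1"] False by simp
      hence "q!i = a+1" using False by simp
      moreover have "q!j = a-1" using qj by simp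
      moreover have "R = replicate_mset (b-2) a" using Rrep sz False by simp
      ultimately have "mset q = mset (qa a b)" using R(1) unfolding mset_qa
        by (simp add: add_mset_commute)
      hence "q = qa a b" using desc_unique assms(4) sorted_qa assms(1) by metis
      thus ?thesis ..
    qed
  next
    case False
    hence "j = length q" using ij by simp
    hence "mset (replicate b a) = filter_mset (\<lambda>x. x \<noteq> 0)
       (add_mset 1 (add_mset (q!i-1) (mset q - {#q!i#})))"
      using ij mset_transfer_new[of i q] by simp
    hence "1 \<in># mset (replicate b a)" by simp
    hence "a = 1" using allA by blast
    thus ?thesis using assms(1) by simp
  qed
qed


lemma part_rep: "a \<ge> 1 \<Longrightarrow> replicate b a \<in> partitions (a*b)"
  unfolding partitions_def is_partition_def by (simp add: sum_list_replicate)
lemma part_qa: "a \<ge> 2 \<Longrightarrow> qa a (c+2) \<in> partitions (a*(c+2))"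
  unfolding partitions_def is_partition_def using sorted_qa[of a "c+2"]
  by (simp add: qa_def sum_list_replicate algebra_simps)
lemma part_qb: "a \<ge> 2 \<Longrightarrow> qb a (c+2) \<in> partitions (a*(c+2))"
  unfolding partitions_def is_partition_def using sorted_qb[of a "c+2"]
  by (simp add: qb_def sum_list_replicate algebra_simps)

lemma move_qa: assumes "a \<ge> 2" shows "one_move (replicate (c+2) a) (qa a (c+2))"
proof -
  have "mset (transfer (replicate (c+2) a) 0 1) = mset (qa a (c+2))"
    using assms mset_transfer[of 0 "replicate (c+2) a" 1] unfolding mset_qa by simp
  hence "transfer (replicate (c+2) a) 0 1 = qa a (c+2)" using desc_unique transfer_sorted sorted_qa assms(1) by metis
  moreover have "qa a (c+2) \<noteq> replicate (c+2) a" unfolding qa_def by simp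
  ultimately show ?thesis unfolding one_move_def
    by (rule_tac x=0 in exI, rule_tac x=1 in exI) auto
qed

lemma move_qb: assumes "a \<ge> 2" shows "one_move (replicate (c+2) a) (qb a (c+2))"
proof -
  have "mset (transfer (replicate (c+2) a) 0 (c+2)) = mset (qb a (c+2))"
    using assms mset_transfer_new[of 0 "replicate (c+2) a"] unfolding mset_qb by simp
  hence "transfer (replicate (c+2) a) 0 (c+2) = qb a (c+2)" using desc_unique transfer_sorted sorted_qb assms(1) by metis
  moreover have "length (qb a (c+2)) = c+3" unfolding qb_def by simp
  hence "qb a (c+2) \<noteq> replicate (c+2) a" by (auto dest: arg_cong[of _ _ length])
  ultimately show ?thesis unfolding one_move_def
    by (rule_tac x=0 in exI, rule_tac x="c+2" in exI) auto
qed

lemma move_ab: assumes "a \<ge> 2" shows "one_move (qa a (c+2)) (qb a (c+2))"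
proof -
  have l: "length (qa a (c+2)) = c+2" unfolding qa_def by simp
  have "mset (transfer (qa a (c+2)) 0 (c+2)) = mset (qb a (c+2))"
    using assms mset_transfer_new[of 0 "qa a (c+2)"] l unfolding mset_qb by (simp add: qa_def add_mset_commute)
  hence "transfer (qa a (c+2)) 0 (c+2) = qb a (c+2)" using desc_unique transfer_sorted sorted_qb assms(1) by metis
  moreover have "length (qb a (c+2)) = c+3" unfolding qb_def by simp
  hence "qb a (c+2) \<noteq> qa a (c+2)" using l by (auto dest: arg_cong[of _ _ length])
  ultimately show ?thesis unfolding one_move_def using l
    by (rule_tac x=0 in exI, rule_tac x="c+2" in exI) auto
qed


lemma nbrs:
  assumes "a \<ge> 2"
  shows "{q. adj (a*(c+2)) (replicate (c+2) a) q} = {qa a (c+2), qb a (c+2)}"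
proof
  show "{q. adj (a*(c+2)) (replicate (c+2) a) q} \<subseteq> {qa a (c+2), qb a (c+2)}"
  proof
    fix q assume "q \<in> {q. adj (a*(c+2)) (replicate (c+2) a) q}"
    hence q: "q \<in> partitions (a*(c+2))" "one_move (replicate (c+2) a) q \<or> one_move q (replicate (c+2) a)"
      unfolding adj_def by auto
    from q(1) have "sorted_wrt (\<ge>) q" "0 \<notin> set q" unfolding partitions_def is_partition_def by auto
    with q(2) fwd[OF assms, of "c+2" q] bwd[OF assms, of "c+2" q] show "q \<in> {qa a (c+2), qb a (c+2)}" by auto
  qed
next
  have p: "replicate (c+2) a \<in> partitions (a*(c+2))" using assms by (intro part_rep) simp
  show "{qa a (c+2), qb a (c+2)} \<subseteq> {q. adj (a*(c+2)) (replicate (c+2) a) q}"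
    using p part_qa[OF assms] part_qb[OF assms] move_qa[OF assms] move_qb[OF assms]
    unfolding adj_def by auto
qed

lemma qa_ne_qb: "qa a (c+2) \<noteq> qb a (c+2)"
proof -
  have "length (qb a (c+2)) = c+3" "length (qa a (c+2)) = c+2" unfolding qb_def qa_def by simp_all
  thus ?thesis by (auto dest: arg_cong[of _ _ length])
qed

lemma p_ne: "replicate (c+2) a \<noteq> qa a (c+2)" "replicate (c+2) a \<noteq> qb a (c+2)"
proof -
  have "length (qb a (c+2)) = c+3" unfolding qb_def by simp
  thus "replicate (c+2) a \<noteq> qb a (c+2)" by (auto dest: arg_cong[of _ _ length])
  show "replicate (c+2) a \<noteq> qa a (c+2)" unfolding qa_def by simp
qed

lemma degree_rect: "a \<ge> 2 \<Longrightarrow> degree (a*(c+2)) (replicate (c+2) a) = 2"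
  unfolding degree_def using nbrs qa_ne_qb by simp

lemma clique_rect:
  assumes "a \<ge> 2"
  shows "max_clique_at (a*(c+2)) (replicate (c+2) a) = 3"
proof -
  let ?n = "a*(c+2)" and ?p = "replicate (c+2) a"
  let ?S = "{card C | C. is_clique ?n C \<and> ?p \<in> C}"
  have sub: "C \<subseteq> {?p, qa a (c+2), qb a (c+2)}" if "is_clique ?n C" "?p \<in> C" for C
  proof
    fix q assume "q \<in> C"
    show "q \<in> {?p, qa a (c+2), qb a (c+2)}"
    proof (cases "q = ?p")
      case False
      hence "adj ?n ?p q" using that \<open>q \<in> C\<close> unfolding is_clique_def by auto
      thus ?thesis using nbrs[OF assms, of c] by auto
    qed simp
  qed
  have c3: "card {?p, qa a (c+2), qb a (c+2)} = 3" using p_ne qa_ne_qb by simp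
  have le: "x \<le> 3" if "x \<in> ?S" for x
  proof -
    obtain C where "x = card C" "is_clique ?n C" "?p \<in> C" using \<open>x \<in> ?S\<close> by auto
    thus ?thesis using sub card_mono[of "{?p, qa a (c+2), qb a (c+2)}" C] c3 by fastforce
  qed
  have pp: "?p \<in> partitions ?n" using assms by (intro part_rep) simp
  have A1: "adj ?n ?p (qa a (c+2))" "adj ?n (qa a (c+2)) ?p"
    unfolding adj_def using pp part_qa[OF assms] move_qa[OF assms] by blast+
  have A2: "adj ?n ?p (qb a (c+2))" "adj ?n (qb a (c+2)) ?p"
    unfolding adj_def using pp part_qb[OF assms] move_qb[OF assms] by blast+
  have A3: "adj ?n (qa a (c+2)) (qb a (c+2))" "adj ?n (qb a (c+2)) (qa a (c+2))"
    unfolding adj_def using part_qa[OF assms] part_qb[OF assms] move_ab[OF assms] by blast+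
  have cl: "is_clique ?n {?p, qa a (c+2), qb a (c+2)}"
    unfolding is_clique_def using pp part_qa[OF assms] part_qb[OF assms] A1 A2 A3 by blast
  have "3 \<in> ?S" using cl c3 by force
  moreover have "finite ?S" using le by (meson finite_atMost finite_subset atMost_iff subsetI)
  ultimately have "Max ?S = 3" using le by (meson Max_eqI)
  thus ?thesis unfolding max_clique_at_def .
qed

lemma conj_rep: "b \<ge> 1 \<Longrightarrow> conj_part (replicate b a) = replicate a b"
proof -
  assume "b \<ge> 1"
  hence "conj_part (replicate b a) = map (\<lambda>i. length (filter (\<lambda>x. i < x) (replicate b a))) [0..<a]"
    unfolding conj_part_def by (cases b) auto
  also have "\<dots> = map (\<lambda>i. b) [0..<a]" by (rule map_cong) auto
  finally show ?thesis by (simp add: map_replicate_const)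
qed

lemma conj_two: assumes "y \<le> x" "1 \<le> y" shows "conj_part [x,y] = replicate y 2 @ replicate (x-y) 1"
proof -
  have "[0..<x] = [0..<y] @ [y..<x]" using upt_add_eq_append[of 0 y "x-y"] assms by simp
  hence "conj_part [x,y] = map (\<lambda>i. length (filter (\<lambda>z. i < z) [x,y])) [0..<y]
     @ map (\<lambda>i. length (filter (\<lambda>z. i < z) [x,y])) [y..<x]"
    unfolding conj_part_def by simp
  also have "map (\<lambda>i. length (filter (\<lambda>z. i < z) [x,y])) [0..<y] = map (\<lambda>i. 2) [0..<y]"
    by (rule map_cong) (use assms in auto)
  also have "map (\<lambda>i. length (filter (\<lambda>z. i < z) [x,y])) [y..<x] = map (\<lambda>i. 1) [y..<x]"
    by (rule map_cong) auto
  finally show ?thesis by (simp add: map_replicate_const)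
qed


lemma inter_single: "A \<inter> B \<subseteq> {x} \<Longrightarrow> x \<in> A \<Longrightarrow> x \<in> B \<Longrightarrow> A \<inter> B = {x}"
  by blast

lemma rep_main: assumes h: "replicate b a = x # replicate k (1::nat)" and b: "b \<ge> 2" shows "a = 1"
proof -
  have "k \<ge> 1" using arg_cong[OF h, of length] b by simp
  have "replicate b a ! 1 = a" using b by simp
  moreover have "(x # replicate k 1) ! 1 = 1" using \<open>k \<ge> 1\<close> by simp
  ultimately show ?thesis by (simp add: h)
qed

lemma rep_two:
  assumes "replicate b a = replicate k (2::nat) @ replicate m 1" "k \<ge> 1"
  shows "a = 2 \<and> m = 0 \<and> b = k"
proof -
  have "2 \<in> set (replicate b a)" using assms by (simp del: set_replicate)
  hence a: "a = 2" by (simp split: if_splits)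
  have "m = 0"
  proof (rule ccontr)
    assume "m \<noteq> 0"
    hence "1 \<in> set (replicate b a)" using assms by (simp del: set_replicate)
    thus False using a by (simp split: if_splits)
  qed
  moreover have "b = k + m" using arg_cong[OF assms(1), of length] by simp
  ultimately show ?thesis using a by simp
qed

lemma sq_inj: "(a::nat) * a = c * c \<Longrightarrow> a = c"
proof (rule ccontr)
  assume h: "a * a = c * c" "a \<noteq> c"
  hence "a < c \<or> c < a" by auto
  hence "a * a < c * c \<or> c * c < a * a" by (auto intro: mult_strict_mono)
  thus False using h by simp
qed

theorem proposition3p9:
  fixes n :: nat
  assumes "n \<ge> 2"
  shows "rect_star n \<inter> main_chain n = {} \<and>
         (even n \<and> n \<ge> 4 \<longrightarrow>
           rect_star n \<inter> left_edge n = {[n div 2, n div 2]} \<and>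
           rect_star n \<inter> right_edge n = {rect_part 2 (n div 2)}) \<and>
         (n = 2 \<or> odd n \<longrightarrow>
           rect_star n \<inter> left_edge n = {} \<and> rect_star n \<inter> right_edge n = {}) \<and>
         (\<forall>a. n = a ^ 2 \<longrightarrow> rect_star n \<inter> self_conj n = {rect_part a a}) \<and>
         ((\<nexists>a. n = a ^ 2) \<longrightarrow> rect_star n \<inter> self_conj n = {}) \<and>
         rect_star n \<subseteq> deg_set 2 n \<inter> local_dim_set 2 n"
proof -
  have RS: "rect_star n = {replicate b a | a b. a * b = n \<and> 2 \<le> a \<and> 2 \<le> b}"
    unfolding rect_star_def rect_part_def by simp
  have P1: "rect_star n \<inter> main_chain n = {}"
  proof (rule ccontr)
    assume "rect_star n \<inter> main_chain n \<noteq> {}"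
    then obtain a b k where "replicate b a = (n-k) # replicate k 1" "2 \<le> a" "2 \<le> b"
      unfolding RS main_chain_def by blast
    thus False using rep_main by fastforce
  qed
  have LE: "a = k \<and> b = 2 \<and> n = 2 * k"
    if "replicate b a = [n - k, k]" "a * b = n" "k \<le> n div 2" for a b k
  proof -
    have "b = 2" using arg_cong[OF that(1), of length] by simp
    moreover have "a = k" "a = n - k" using that(1) \<open>b = 2\<close> by (simp_all add: numeral_2_eq_2)
    ultimately show ?thesis using that(2) by simp
  qed
  have RE: "a = 2 \<and> b = k \<and> n = 2 * k"
    if "replicate b a = conj_part [n - k, k]" "1 \<le> k" "k \<le> n div 2" for a b k
  proof -
    have kk: "k \<le> n - k" using that(3) by presburger
    have "conj_part [n-k,k] = replicate k 2 @ replicate (n-k-k) 1" by (rule conj_two[OF kk that(2)])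
    hence "replicate b a = replicate k 2 @ replicate (n - k - k) 1" using that(1) by (rule trans[rotated])
    from rep_two[OF this that(2)] have "a = 2" "n - k - k = 0" "b = k" by auto
    moreover have "n = 2 * k" using kk \<open>n - k - k = 0\<close> by arith
    ultimately show ?thesis by blast
  qed
  have P2: "even n \<and> n \<ge> 4 \<longrightarrow>
           rect_star n \<inter> left_edge n = {[n div 2, n div 2]} \<and>
           rect_star n \<inter> right_edge n = {rect_part 2 (n div 2)}"
  proof
    assume h: "even n \<and> n \<ge> 4"
    have f1: "rect_star n \<inter> left_edge n \<subseteq> {[n div 2, n div 2]}"
    proof
      fix y assume "y \<in> rect_star n \<inter> left_edge n"
      then obtain a b k where y: "y = replicate b a" "a * b = n" "replicate b a = [n-k,k]" "k \<le> n div 2"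
        unfolding RS left_edge_def by blast
      from LE[OF y(3) y(2) y(4)] have "a = k" "b = 2" "n = 2*k" by auto
      moreover have "n div 2 = k" using \<open>n = 2*k\<close> by simp
      moreover have "replicate 2 k = [k, k]" by (simp add: numeral_2_eq_2)
      ultimately show "y \<in> {[n div 2, n div 2]}" using y(1) by simp
    qed
    have f2: "[n div 2, n div 2] \<in> rect_star n"
    proof -
      have "[n div 2, n div 2] = replicate 2 (n div 2)" by (simp add: numeral_2_eq_2)
      moreover have "(n div 2) * 2 = n" using h by simp
      moreover have "2 \<le> n div 2" using h by presburger
      moreover have "replicate 2 (n div 2) \<in> {replicate b a | a b. a * b = n \<and> 2 \<le> a \<and> 2 \<le> b}"
        using calculation(2,3) by blast
      ultimately show ?thesis unfolding RS by simp
    qed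
    have f3: "[n div 2, n div 2] \<in> left_edge n"
    proof -
      have e: "n - n div 2 = n div 2" "1 \<le> n div 2" using h by presburger+
      hence "[n - n div 2, n div 2] \<in> left_edge n" unfolding left_edge_def by blast
      thus ?thesis using e(1) by simp
    qed
    have f4: "rect_star n \<inter> right_edge n \<subseteq> {rect_part 2 (n div 2)}"
    proof
      fix y assume "y \<in> rect_star n \<inter> right_edge n"
      then obtain a b k where y: "y = replicate b a" "replicate b a = conj_part [n-k,k]" "1 \<le> k" "k \<le> n div 2"
        unfolding RS right_edge_def left_edge_def by blast
      from RE[OF y(2) y(3) y(4)] have "a = 2" "b = k" "n = 2*k" by auto
      thus "y \<in> {rect_part 2 (n div 2)}" using y(1) by (simp add: rect_part_def)
    qed
    have f5: "rect_part 2 (n div 2) \<in> rect_star n"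
    proof -
      have "2 * (n div 2) = n" using h by simp
      moreover have "2 \<le> n div 2" using h by presburger
      ultimately show ?thesis unfolding rect_star_def by blast
    qed
    have f6: "rect_part 2 (n div 2) \<in> right_edge n"
    proof -
      have e: "n - n div 2 = n div 2" "1 \<le> n div 2" using h by presburger+
      have "conj_part [n - n div 2, n div 2] = rect_part 2 (n div 2)"
        using conj_two[of "n div 2" "n div 2"] e unfolding rect_part_def by simp
      moreover have "[n - n div 2, n div 2] \<in> left_edge n"
      proof -
        have "1 \<le> n div 2" using h by presburger
        thus ?thesis unfolding left_edge_def by blast
      qed
      ultimately show ?thesis unfolding right_edge_def by (metis image_eqI)
    qed
    show "rect_star n \<inter> left_edge n = {[n div 2, n div 2]} \<and>
           rect_star n \<inter> right_edge n = {rect_part 2 (n div 2)}"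
      using inter_single[OF f1 f2 f3] inter_single[OF f4 f5 f6] by (rule conjI)
  qed
  have P3: "n = 2 \<or> odd n \<longrightarrow>
           rect_star n \<inter> left_edge n = {} \<and> rect_star n \<inter> right_edge n = {}"
  proof
    assume h: "n = 2 \<or> odd n"
    have "rect_star n \<inter> left_edge n = {}"
    proof (rule ccontr)
      assume "rect_star n \<inter> left_edge n \<noteq> {}"
      then obtain a b k where y: "a * b = n" "2 \<le> a" "replicate b a = [n-k,k]" "k \<le> n div 2"
        unfolding RS left_edge_def by blast
      from LE[OF y(3) y(1) y(4)] have "a = k" "n = 2*k" by auto
      thus False using h y(2) by auto
    qed
    moreover have "rect_star n \<inter> right_edge n = {}"
    proof (rule ccontr)
      assume "rect_star n \<inter> right_edge n \<noteq> {}"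
      then obtain a b k where y: "a * b = n" "2 \<le> b" "replicate b a = conj_part [n-k,k]" "1 \<le> k" "k \<le> n div 2"
        unfolding RS right_edge_def left_edge_def by blast
      from RE[OF y(3) y(4) y(5)] have "b = k" "n = 2*k" by auto
      thus False using h y(2) by auto
    qed
    ultimately show "rect_star n \<inter> left_edge n = {} \<and> rect_star n \<inter> right_edge n = {}" ..
  qed
  have SC: "a = b" if "replicate b a \<in> self_conj n" "2 \<le> b" for a b
  proof -
    have "conj_part (replicate b a) = replicate b a" using that(1) unfolding self_conj_def by blast
    moreover have "conj_part (replicate b a) = replicate a b" using that(2) by (intro conj_rep) arith
    ultimately have "replicate a b = replicate b a" by simp
    from arg_cong[OF this, of length] show ?thesis by simp
  qed
  have P4: "\<forall>a. n = a ^ 2 \<longrightarrow> rect_star n \<inter> self_conj n = {rect_part a a}"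
  proof (intro allI impI)
    fix a assume h: "n = a ^ 2"
    have a2: "a \<ge> 2" proof (rule ccontr)
      assume "\<not> a \<ge> 2"
      hence "a = 0 \<or> a = 1" by auto
      thus False using h assms by auto
    qed
    have "rect_star n \<inter> self_conj n \<subseteq> {rect_part a a}"
    proof
      fix x assume "x \<in> rect_star n \<inter> self_conj n"
      then obtain a' b' where x: "x = replicate b' a'" "a' * b' = n" "2 \<le> a'" "2 \<le> b'" "x \<in> self_conj n"
        unfolding RS by auto
      hence "a' = b'" using SC by blast
      hence "a' * a' = a * a" using x(2) h by (simp add: power2_eq_square)
      hence "a' = a" by (rule sq_inj)
      thus "x \<in> {rect_part a a}" using x \<open>a' = b'\<close> unfolding rect_part_def by simp
    qed
    moreover have "rect_part a a \<in> rect_star n"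
    proof -
      have "a * a = n" using h by (simp add: power2_eq_square)
      thus ?thesis unfolding rect_star_def using a2 by blast
    qed
    moreover have "rect_part a a \<in> self_conj n"
    proof -
      have "a * a = n" using h by (simp add: power2_eq_square)
      moreover have "replicate a a \<in> partitions (a * a)" using a2 by (intro part_rep) arith
      moreover have "conj_part (replicate a a) = replicate a a" using a2 by (intro conj_rep) arith
      ultimately show ?thesis unfolding self_conj_def rect_part_def by simp
    qed
    ultimately show "rect_star n \<inter> self_conj n = {rect_part a a}" by (rule inter_single)
  qed
  have P5: "(\<nexists>a. n = a ^ 2) \<longrightarrow> rect_star n \<inter> self_conj n = {}"
  proof
    assume h: "\<nexists>a. n = a ^ 2"
    show "rect_star n \<inter> self_conj n = {}"
    proof (rule ccontr)
      assume "rect_star n \<inter> self_conj n \<noteq> {}"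
      then obtain a' b' where x: "a' * b' = n" "2 \<le> a'" "2 \<le> b'" "replicate b' a' \<in> self_conj n"
        unfolding RS by auto
      hence "a' = b'" using SC by blast
      hence "n = a' ^ 2" using x(1) by (simp add: power2_eq_square)
      thus False using h by blast
    qed
  qed
  have P6: "rect_star n \<subseteq> deg_set 2 n \<inter> local_dim_set 2 n"
  proof
    fix x assume "x \<in> rect_star n"
    then obtain a b where x: "x = replicate b a" "a * b = n" "2 \<le> a" "2 \<le> b" unfolding RS by auto
    obtain c where c: "b = c + 2" using x(4) by (metis add.commute le_Suc_ex)
    have "x \<in> partitions n" using x part_rep[of a b] by simp
    moreover have "degree n x = 2" using degree_rect[of a c] x c by simp
    moreover have "max_clique_at n x = 3" using clique_rect[of a c] x c by simp
    ultimately show "x \<in> deg_set 2 n \<inter> local_dim_set 2 n"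
      unfolding deg_set_def local_dim_set_def by simp
  qed
  show ?thesis by (rule conjI[OF P1 conjI[OF P2 conjI[OF P3 conjI[OF P4 conjI[OF P5 P6]]]]])
qed

end
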